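(* Let $p\in(0,1/16)$. Then for any $m,n\in\mathbb N$ the set $$\Delta_{mn}(p)=\{q\in(0,1/16):\ S_1^m(A_{pq})\cap S_2^n(A_{pq})\neq\varnothing\}$$ is closed and nowhere dense in $(0,1/16)$.
   Context: For $p,q\in(0,1/2)$ let $S_1(x)=px$, $S_2(x)=qx$, $S_3(x)=px+1-p$, $S_4(x)=qx+1-q$, let $K_{pq}$ be the attractor of $\{S_1,S_2,S_3,S_4\}$ (the unique nonempty compact $K\subset\mathbb R$ with $K=\bigcup_{i=1}^4S_i(K)$), and let $A_{pq}=S_3(K_{pq})\cup S_4(K_{pq})$. In the definition of $\Delta_{mn}(p)$ the maps $S_2,S_3,S_4$ and the set $A_{pq}$ are those corresponding to the parameters $p,q$. *)

theory Defs
  imports "HOL-Analysis.Analysis"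
begin

definition S1 :: "real \<Rightarrow> real \<Rightarrow> real" where "S1 p x = p * x"
definition S2 :: "real \<Rightarrow> real \<Rightarrow> real" where "S2 q x = q * x"
definition S3 :: "real \<Rightarrow> real \<Rightarrow> real" where "S3 p x = p * x + 1 - p"
definition S4 :: "real \<Rightarrow> real \<Rightarrow> real" where "S4 q x = q * x + 1 - q"

definition attractor :: "real \<Rightarrow> real \<Rightarrow> real set" where
  "attractor p q = (THE K. compact K \<and> K \<noteq> {} \<and>
     K = S1 p ` K \<union> S2 q ` K \<union> S3 p ` K \<union> S4 q ` K)"

definition A_set :: "real \<Rightarrow> real \<Rightarrow> real set" where
  "A_set p q = S3 p ` attractor p q \<union> S4 q ` attractor p q"

definition Delta :: "nat \<Rightarrow> nat \<Rightarrow> real \<Rightarrow> real set" where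
  "Delta m n p = {q \<in> {0<..<1/16}.
      ((S1 p) ^^ m) ` A_set p q \<inter> ((S2 q) ^^ n) ` A_set p q \<noteq> {}}"

end

theory Submission imports Defs begin


definition rat :: "real \<Rightarrow> real \<Rightarrow> nat \<Rightarrow> real" where
  "rat p q i = (if i = 0 \<or> i = 2 then p else q)"
definition off :: "real \<Rightarrow> real \<Rightarrow> nat \<Rightarrow> real" where
  "off p q i = (if i = 2 then 1 - p else if i = 3 then 1 - q else 0)"
definition T :: "real \<Rightarrow> real \<Rightarrow> nat \<Rightarrow> real \<Rightarrow> real" where
  "T p q i x = rat p q i * x + off p q i"

definition F :: "real \<Rightarrow> real \<Rightarrow> real set \<Rightarrow> real set" where
  "F p q X = (\<Union>i\<in>{..<4}. T p q i ` X)"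

lemma four: "{..<4::nat} = {0,1,2,3}" by auto

lemma F_eq: "S1 p ` K \<union> S2 q ` K \<union> S3 p ` K \<union> S4 q ` K = F p q K"
proof -
  have "T p q 0 = S1 p" "T p q 1 = S2 q" "T p q 2 = S3 p" "T p q 3 = S4 q"
    by (auto simp: T_def rat_def off_def S1_def S2_def S3_def S4_def fun_eq_iff)
  then show ?thesis unfolding F_def four by auto
qed

lemma F_mono: "X \<subseteq> Y \<Longrightarrow> F p q X \<subseteq> F p q Y"
  unfolding F_def by auto

lemma T_01: "0 \<le> p \<Longrightarrow> p \<le> 1 \<Longrightarrow> 0 \<le> q \<Longrightarrow> q \<le> 1 \<Longrightarrow> 0 \<le> x \<Longrightarrow> x \<le> 1
  \<Longrightarrow> 0 \<le> T p q i x \<and> T p q i x \<le> 1"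
  unfolding T_def rat_def off_def
  by (auto simp: mult_le_one) (auto intro: mult_left_le[of x p, simplified] mult_left_le[of x q, simplified]
      simp: algebra_simps mult_nonneg_nonneg)

lemma F_01: "0 \<le> p \<Longrightarrow> p \<le> 1 \<Longrightarrow> 0 \<le> q \<Longrightarrow> q \<le> 1 \<Longrightarrow> F p q {0..1} \<subseteq> {0..1}"
  unfolding F_def using T_01 by fastforce

lemma T_cont: "continuous_on X (T p q i)"
  unfolding T_def by (intro continuous_intros)

lemma F_compact: "compact X \<Longrightarrow> compact (F p q X)"
  unfolding F_def by (intro compact_UN compact_continuous_image T_cont) auto

definition X :: "real \<Rightarrow> real \<Rightarrow> nat \<Rightarrow> real set" where
  "X p q k = (F p q ^^ k) {0..1}"

definition K0 :: "real \<Rightarrow> real \<Rightarrow> real set" where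
  "K0 p q = (\<Inter>k. X p q k)"

lemma X_Suc: "X p q (Suc k) = F p q (X p q k)" by (simp add: X_def)
lemma X_0: "X p q 0 = {0..1}" by (simp add: X_def)

locale good = fixes p q :: real assumes p0: "0 < p" and p1: "p < 1/16" and q0: "0 < q" and q1: "q < 1/16"
begin

lemma X_dec: "X p q (Suc k) \<subseteq> X p q k"
proof (induction k)
  case 0 show ?case using F_01[of p q] p0 p1 q0 q1 by (simp add: X_Suc X_0)
next
  case (Suc k) then show ?case by (simp add: X_Suc F_mono)
qed

lemma X_anti: "k \<le> l \<Longrightarrow> X p q l \<subseteq> X p q k"
  using X_dec by (rule lift_Suc_antimono_le[of "X p q"])

lemma X_01: "X p q k \<subseteq> {0..1}" using X_anti[of 0 k] by (simp add: X_0)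

lemma X_compact: "compact (X p q k)"
  by (induction k) (auto simp: X_0 X_Suc F_compact)

lemma zero_X: "0 \<in> X p q k"
proof (induction k)
  case 0 then show ?case by (simp add: X_0)
next
  case (Suc k)
  have "T p q 0 0 = 0" by (simp add: T_def rat_def off_def)
  then have "0 \<in> T p q 0 ` X p q k" using Suc by (metis image_eqI)
  then show ?case by (auto simp: X_Suc F_def)
qed

lemma K0_01: "K0 p q \<subseteq> {0..1}" using X_01[of 0] by (auto simp: K0_def)

lemma K0_compact: "compact (K0 p q)"
proof -
  have "closed (K0 p q)" unfolding K0_def using X_compact by (intro closed_INT) (auto intro: compact_imp_closed)
  moreover have "bounded (K0 p q)" using K0_01 bounded_subset[of "{0..1::real}"] by auto
  ultimately show ?thesis using compact_eq_bounded_closed by blast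
qed

lemma zero_K0: "0 \<in> K0 p q" using zero_X by (auto simp: K0_def)

lemma rat_pos: "0 < rat p q i" using p0 q0 by (simp add: rat_def)
lemma rat_le: "rat p q i \<le> 1/16" using p1 q1 by (simp add: rat_def)

lemma T_inj: "T p q i x = T p q i y \<Longrightarrow> x = y"
  using rat_pos[of i] by (simp add: T_def)

lemma F_K0: "F p q (K0 p q) = K0 p q"
proof
  show "F p q (K0 p q) \<subseteq> K0 p q"
  proof -
    have "F p q (K0 p q) \<subseteq> X p q k" for k
    proof (cases k)
      case 0
      have "F p q (K0 p q) \<subseteq> F p q {0..1}" using K0_01 by (rule F_mono)
      also have "\<dots> \<subseteq> {0..1}" using F_01[of p q] p0 p1 q0 q1 by simp
      finally show ?thesis using 0 by (simp add: X_0)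
    next
      case (Suc l)
      have "K0 p q \<subseteq> X p q l" by (auto simp: K0_def)
      then show ?thesis using Suc by (simp add: X_Suc F_mono)
    qed
    then show ?thesis by (auto simp: K0_def)
  qed
next
  show "K0 p q \<subseteq> F p q (K0 p q)"
  proof
    fix x assume x: "x \<in> K0 p q"
    define P where "P i k \<longleftrightarrow> x \<in> T p q i ` X p q k" for i k
    have anti: "P i k \<Longrightarrow> l \<le> k \<Longrightarrow> P i l" for i k l
      using X_anti[of l k] by (auto simp: P_def)
    have ex: "\<exists>i<4. P i k" for k
    proof -
      have "x \<in> X p q (Suc k)" using x by (auto simp: K0_def)
      then show ?thesis by (auto simp: P_def F_def X_Suc)
    qed
    have "\<exists>i<4. \<forall>k. P i k"
    proof (rule ccontr)
      assume "\<not> ?thesis"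
      then have "\<forall>i\<in>{..<4}. \<exists>k. \<not> P i k" by auto
      then obtain g where g: "\<And>i. i \<in> {..<4} \<Longrightarrow> \<not> P i (g i)" by metis
      define M where "M = Max (g ` {..<4})"
      have "g i \<le> M" if "i < 4" for i unfolding M_def using that by (intro Max_ge) auto
      then have "\<not> P i M" if "i < 4" for i using g anti that by blast
      then show False using ex[of M] by blast
    qed
    then obtain i where i: "i < 4" "\<And>k. P i k" by blast
    define y where "y = (x - off p q i) / rat p q i"
    have xy: "x = T p q i y" using rat_pos[of i] by (simp add: y_def T_def)
    have "y \<in> X p q k" for k
    proof -
      obtain z where "z \<in> X p q k" "x = T p q i z" using i(2)[of k] by (auto simp: P_def)
      then show ?thesis using xy T_inj by metis
    qed
    then have "y \<in> K0 p q" by (auto simp: K0_def)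
    then show "x \<in> F p q (K0 p q)" using i xy by (auto simp: F_def)
  qed
qed


lemma T_dist: "dist (T p q i x) (T p q i y) = rat p q i * dist x y"
  using rat_pos[of i] by (simp add: T_def dist_real_def abs_mult right_diff_distrib[symmetric])

lemma sol_sub:
  assumes K1: "compact K1" "K1 \<noteq> {}" "K1 = F p q K1"
    and K2: "compact K2" "K2 \<noteq> {}" "K2 = F p q K2"
  shows "K1 \<subseteq> K2"
proof -
  obtain x0 where x0: "x0 \<in> K1" "\<And>x. x \<in> K1 \<Longrightarrow> infdist x K2 \<le> infdist x0 K2"
    using continuous_attains_sup[OF K1(1,2) continuous_on_infdist[OF continuous_on_id, of K1 K2]] by auto
  define s where "s = infdist x0 K2"
  have "x0 \<in> F p q K1" using x0 K1(3) by simp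
  then obtain i y where i: "i < 4" "y \<in> K1" "x0 = T p q i y" by (auto simp: F_def)
  obtain y' where y': "y' \<in> K2" "\<And>z. z \<in> K2 \<Longrightarrow> dist y y' \<le> dist y z"
    using distance_attains_inf[OF compact_imp_closed[OF K2(1)] K2(2)] by metis
  have "dist y y' = infdist y K2"
  proof (rule antisym)
    show "dist y y' \<le> infdist y K2" using y' K2(2) by (auto simp: infdist_def intro!: cINF_greatest)
    show "infdist y K2 \<le> dist y y'" using y'(1) by (rule infdist_le)
  qed
  also have "\<dots> \<le> s" using x0(2)[OF i(2)] s_def by simp
  finally have dy: "dist y y' \<le> s" .
  have "T p q i y' \<in> K2" using y' i K2(3) by (auto simp: F_def)
  then have "s \<le> dist x0 (T p q i y')" unfolding s_def by (rule infdist_le)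
  also have "\<dots> = rat p q i * dist y y'" using i by (simp add: T_dist)
  also have "\<dots> \<le> 1/16 * s" using dy rat_le[of i] rat_pos[of i]
    by (meson mult_mono dual_order.trans less_imp_le zero_le_dist)
  finally have "s \<le> 0" using infdist_nonneg[of x0 K2] s_def by simp
  then have "infdist x K2 = 0" if "x \<in> K1" for x using x0(2)[OF that] infdist_nonneg[of x K2] s_def by simp
  then show ?thesis using in_closed_iff_infdist_zero[OF compact_imp_closed[OF K2(1)] K2(2)] by blast
qed

lemma attractor_eq: "attractor p q = K0 p q"
  unfolding attractor_def F_eq
proof (rule the_equality)
  show "compact (K0 p q) \<and> K0 p q \<noteq> {} \<and> K0 p q = F p q (K0 p q)"
    using K0_compact zero_K0 F_K0 by auto
next
  fix K assume "compact K \<and> K \<noteq> {} \<and> K = F p q K"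
  then show "K = K0 p q" using sol_sub[of K "K0 p q"] sol_sub[of "K0 p q" K] K0_compact zero_K0 F_K0 by auto
qed


lemma K_compact: "compact (attractor p q)" using K0_compact attractor_eq by simp
lemma K_ne: "0 \<in> attractor p q" using zero_K0 attractor_eq by simp
lemma K_01: "attractor p q \<subseteq> {0..1}" using K0_01 attractor_eq by simp
lemma K_F: "F p q (attractor p q) = attractor p q" using F_K0 attractor_eq by simp
lemma K_T: "i < 4 \<Longrightarrow> x \<in> attractor p q \<Longrightarrow> T p q i x \<in> attractor p q"
  using K_F by (auto simp: F_def)

lemma A_eq: "A_set p q = attractor p q \<inter> {1/2..}"
proof
  have "T p q 2 = S3 p" "T p q 3 = S4 q"
    by (auto simp: T_def rat_def off_def S3_def S4_def fun_eq_iff)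
  moreover have "S3 p x \<ge> 1/2" "S4 q x \<ge> 1/2" if "x \<in> attractor p q" for x
  proof -
    have "0 \<le> x" using that K_01 by auto
    then have "0 \<le> p * x" "0 \<le> q * x" using p0 q0 by auto
    then show "S3 p x \<ge> 1/2" "S4 q x \<ge> 1/2" using p1 q1 by (auto simp: S3_def S4_def)
  qed
  ultimately show "A_set p q \<subseteq> attractor p q \<inter> {1/2..}"
    unfolding A_set_def using K_T[of 2] K_T[of 3] by fastforce
next
  show "attractor p q \<inter> {1/2..} \<subseteq> A_set p q"
  proof
    fix x assume x: "x \<in> attractor p q \<inter> {1/2..}"
    then have "x \<in> F p q (attractor p q)" using K_F by simp
    then obtain i y where i: "i < 4" "y \<in> attractor p q" "x = T p q i y" by (auto simp: F_def)
    have y: "0 \<le> y" "y \<le> 1" using i K_01 by auto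
    have "i = 2 \<or> i = 3"
    proof (rule ccontr)
      assume "\<not> ?thesis"
      then have "x = rat p q i * y" using i by (auto simp: T_def off_def)
      also have "\<dots> \<le> 1/16" using rat_le[of i] rat_pos[of i] y
        by (metis mult_left_le order.strict_implies_order order_trans)
      finally show False using x by auto
    qed
    then show "x \<in> A_set p q" using i
      by (auto simp: A_set_def T_def rat_def off_def S3_def S4_def)
  qed
qed

lemma A_bounds: assumes "a \<in> A_set p q" shows "15/16 \<le> a \<and> a \<le> 1"
proof -
  obtain x where x: "x \<in> attractor p q" "a = S3 p x \<or> a = S4 q x" using assms by (auto simp: A_set_def)
  then have "0 \<le> x" "x \<le> 1" using K_01 by auto
  then have "0 \<le> p * x" "0 \<le> q * x" "p * x \<le> p" "q * x \<le> q" using p0 q0 mult_left_le[of x p] mult_left_le[of x q] by auto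
  then show ?thesis using x(2) p1 q1 by (auto simp: S3_def S4_def)
qed

end



fun Sw :: "real \<Rightarrow> real \<Rightarrow> nat list \<Rightarrow> real \<Rightarrow> real" where
  "Sw p q [] x = x"
| "Sw p q (i # w) x = T p q i (Sw p q w x)"

lemma Sw_snoc: "Sw p q (w @ [i]) z = Sw p q w (T p q i z)"
  by (induction w) auto

lemma Sw_01: "0 \<le> p \<Longrightarrow> p \<le> 1 \<Longrightarrow> 0 \<le> q \<Longrightarrow> q \<le> 1 \<Longrightarrow> 0 \<le> x \<Longrightarrow> x \<le> 1
  \<Longrightarrow> 0 \<le> Sw p q w x \<and> Sw p q w x \<le> 1"
  by (induction w) (simp_all add: T_01)

lemma Sw_contr:
  assumes "0 \<le> p" "p \<le> \<rho>" "0 \<le> q" "q \<le> \<rho>"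
  shows "\<bar>Sw p q w x - Sw p q w y\<bar> \<le> \<rho> ^ length w * \<bar>x - y\<bar>"
proof (induction w)
  case Nil then show ?case by simp
next
  case (Cons i w)
  have r: "0 \<le> rat p q i" "rat p q i \<le> \<rho>" using assms by (auto simp: rat_def)
  have "\<bar>Sw p q (i # w) x - Sw p q (i # w) y\<bar> = rat p q i * \<bar>Sw p q w x - Sw p q w y\<bar>"
    using r by (simp add: T_def abs_mult right_diff_distrib[symmetric])
  also have "\<dots> \<le> \<rho> * (\<rho> ^ length w * \<bar>x - y\<bar>)"
    using Cons r by (intro mult_mono) auto
  finally show ?case by (simp add: mult.assoc)
qed

lemma Sw_lip:
  assumes "0 \<le> p" "p \<le> 1/16" "0 \<le> q1" "q1 \<le> 1/16" "0 \<le> q2" "q2 \<le> 1/16" "0 \<le> x" "x \<le> 1"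
  shows "\<bar>Sw p q1 w x - Sw p q2 w x\<bar> \<le> 2 * \<bar>q1 - q2\<bar>"
proof (induction w)
  case Nil then show ?case by simp
next
  case (Cons i w)
  define a1 where "a1 = Sw p q1 w x"
  define a2 where "a2 = Sw p q2 w x"
  have a: "0 \<le> a1" "a1 \<le> 1" "0 \<le> a2" "a2 \<le> 1" using Sw_01 assms unfolding a1_def a2_def by auto
  have IH: "\<bar>a1 - a2\<bar> \<le> 2 * \<bar>q1 - q2\<bar>" using Cons a1_def a2_def by simp
  have "\<bar>T p q1 i a1 - T p q2 i a2\<bar> \<le> 2 * \<bar>q1 - q2\<bar>"
  proof (cases "i = 0 \<or> i = 2")
    case True
    then have "\<bar>T p q1 i a1 - T p q2 i a2\<bar> = p * \<bar>a1 - a2\<bar>"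
      using assms by (auto simp: T_def rat_def off_def abs_mult right_diff_distrib[symmetric])
    also have "\<dots> \<le> 1 * (2 * \<bar>q1 - q2\<bar>)" using IH assms by (intro mult_mono) auto
    finally show ?thesis by simp
  next
    case False
    then have e: "T p q1 i a1 - T p q2 i a2 = (q1 - q2) * (a1 - (if i = 3 then 1 else 0)) + q2 * (a1 - a2)"
      by (auto simp: T_def rat_def off_def algebra_simps)
    have "\<bar>(q1 - q2) * (a1 - (if i = 3 then 1 else 0))\<bar> \<le> \<bar>q1 - q2\<bar> * 1"
      unfolding abs_mult using a by (intro mult_left_mono) auto
    moreover have "\<bar>q2 * (a1 - a2)\<bar> \<le> 1/16 * (2 * \<bar>q1 - q2\<bar>)"
      unfolding abs_mult using a IH assms by (intro mult_mono) auto
    ultimately show ?thesis unfolding e using abs_triangle_ineq[of "(q1 - q2) * (a1 - (if i = 3 then 1 else 0))" "q2 * (a1 - a2)"] by linarith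
  qed
  then show ?case by (simp add: a1_def a2_def)
qed

context good begin

lemma cyl: "x \<in> attractor p q \<Longrightarrow> \<exists>w y. length w = k \<and> set w \<subseteq> {..<4} \<and> y \<in> attractor p q \<and> x = Sw p q w y"
proof (induction k)
  case 0 then show ?case by (intro exI[of _ "[]"]) auto
next
  case (Suc k)
  then obtain w y where wy: "length w = k" "set w \<subseteq> {..<4}" "y \<in> attractor p q" "x = Sw p q w y" by blast
  then have "y \<in> F p q (attractor p q)" using K_F by simp
  then obtain i z where "i < 4" "z \<in> attractor p q" "y = T p q i z" by (auto simp: F_def)
  then show ?case using wy by (intro exI[of _ "w @ [i]"] exI[of _ z]) (auto simp: Sw_snoc)
qed

lemma Sw_in: "set w \<subseteq> {..<4} \<Longrightarrow> z \<in> attractor p q \<Longrightarrow> Sw p q w z \<in> attractor p q"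
  by (induction w) (auto intro: K_T)

end



lemma near:
  assumes g: "good p q" "good p q'" and x: "x \<in> attractor p q'"
  shows "infdist x (attractor p q) \<le> (1/16)^k + 2 * \<bar>q' - q\<bar>"
proof -
  obtain w y where wy: "length w = k" "set w \<subseteq> {..<4}" "y \<in> attractor p q'" "x = Sw p q' w y"
    using good.cyl[OF g(2) x] by blast
  have gp: "0 < p" "p < 1/16" "0 < q" "q < 1/16" "0 < q'" "q' < 1/16" using g by (auto simp: good_def)
  have y: "0 \<le> y" "y \<le> 1" using good.K_01[OF g(2)] wy by auto
  have "Sw p q w 0 \<in> attractor p q" using good.Sw_in[OF g(1) wy(2) good.K_ne[OF g(1)]] .
  then have "infdist x (attractor p q) \<le> dist x (Sw p q w 0)" by (rule infdist_le)
  also have "\<dots> \<le> \<bar>Sw p q' w y - Sw p q' w 0\<bar> + \<bar>Sw p q' w 0 - Sw p q w 0\<bar>"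
    using wy by (simp add: dist_real_def)
  also have "\<bar>Sw p q' w y - Sw p q' w 0\<bar> \<le> (1/16)^k * \<bar>y - 0\<bar>"
    using Sw_contr[of p "1/16" q' w y 0] gp wy by simp
  also have "\<dots> \<le> (1/16)^k" using y by (simp add: mult_left_le)
  also have "\<bar>Sw p q' w 0 - Sw p q w 0\<bar> \<le> 2 * \<bar>q' - q\<bar>"
    using Sw_lip[of p q' q 0 w] gp by simp
  finally show ?thesis by simp
qed

lemma limit_in:
  assumes g: "good p q" "\<And>j. good p (qs j)" and qs: "qs \<longlonglongrightarrow> q"
    and a: "\<And>j. as j \<in> attractor p (qs j)" "as \<longlonglongrightarrow> a"
  shows "a \<in> attractor p q"
proof -
  have le: "infdist a (attractor p q) \<le> (1/16)^k" for k
  proof (rule LIMSEQ_le)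
    show "(\<lambda>j. infdist (as j) (attractor p q)) \<longlonglongrightarrow> infdist a (attractor p q)"
      using a(2) by (rule tendsto_infdist)
    have "(\<lambda>j. (1/16::real)^k + 2 * \<bar>qs j - q\<bar>) \<longlonglongrightarrow> (1/16)^k + 2 * \<bar>q - q\<bar>"
      using qs by (intro tendsto_intros)
    then show "(\<lambda>j. (1/16::real)^k + 2 * \<bar>qs j - q\<bar>) \<longlonglongrightarrow> (1/16)^k" by simp
    show "\<exists>N. \<forall>n\<ge>N. infdist (as n) (attractor p q) \<le> (1/16)^k + 2 * \<bar>qs n - q\<bar>"
      using near[OF g(1) g(2) a(1)] by blast
  qed
  have "infdist a (attractor p q) \<le> 0"
  proof (rule ccontr)
    assume "\<not> ?thesis"
    then have "infdist a (attractor p q) > 0" by simp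
    then obtain k where "(1/16::real)^k < infdist a (attractor p q)"
      using real_arch_pow_inv[of "infdist a (attractor p q)" "1/16"] by auto
    then show False using le[of k] by simp
  qed
  then have "infdist a (attractor p q) = 0" using infdist_nonneg[of a] by (simp add: antisym)
  then show ?thesis
    using in_closed_iff_infdist_zero[OF compact_imp_closed[OF good.K_compact[OF g(1)]]] good.K_ne[OF g(1)] by blast
qed

lemma pow_S1: "(S1 p ^^ m) x = p ^ m * x" by (induction m) (auto simp: S1_def)
lemma pow_S2: "(S2 q ^^ m) x = q ^ m * x" by (induction m) (auto simp: S2_def)

lemma Delta_iff: "q \<in> Delta m n p \<longleftrightarrow> q \<in> {0<..<1/16} \<and> (\<exists>a b. a \<in> A_set p q \<and> b \<in> A_set p q \<and> p^m * a = q^n * b)"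
  unfolding Delta_def pow_S1 pow_S2 by blast




lemma Delta_closed:
  assumes p: "0 < p" "p < 1/16"
  shows "closedin (top_of_set {0<..<1/16}) (Delta m n p)"
  unfolding closedin_limpt
proof (intro conjI allI impI)
  show "Delta m n p \<subseteq> {0<..<1/16}" by (auto simp: Delta_def)
  fix x assume "x islimpt Delta m n p \<and> x \<in> {0<..<(1/16::real)}"
  then obtain qs where qs: "\<And>j. qs j \<in> Delta m n p - {x}" "qs \<longlonglongrightarrow> x" and x: "0 < x" "x < 1/16"
    unfolding islimpt_sequential by auto
  have "\<forall>j. \<exists>ab. fst ab \<in> A_set p (qs j) \<and> snd ab \<in> A_set p (qs j) \<and> p^m * fst ab = qs j ^ n * snd ab"
  proof
    fix j have "qs j \<in> Delta m n p" using qs(1) by blast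
    then show "\<exists>ab. fst ab \<in> A_set p (qs j) \<and> snd ab \<in> A_set p (qs j) \<and> p^m * fst ab = qs j ^ n * snd ab"
      unfolding Delta_iff by auto
  qed
  then obtain ab where ab: "\<And>j. fst (ab j) \<in> A_set p (qs j)" "\<And>j. snd (ab j) \<in> A_set p (qs j)"
    "\<And>j. p^m * fst (ab j) = qs j ^ n * snd (ab j)" by metis
  have gj: "good p (qs j)" for j using qs(1)[of j] p by (auto simp: good_def Delta_def)
  have gx: "good p x" using x p by (auto simp: good_def)
  have "ab j \<in> {0..1} \<times> {0..1}" for j
  proof -
    have "15/16 \<le> fst (ab j) \<and> fst (ab j) \<le> 1" "15/16 \<le> snd (ab j) \<and> snd (ab j) \<le> 1"
      using good.A_bounds[OF gj] ab(1,2) by blast+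
    then show ?thesis by (cases "ab j") auto
  qed
  moreover have "seq_compact ({0..1::real} \<times> {0..1::real})"
    by (intro compact_imp_seq_compact compact_Times compact_Icc)
  ultimately obtain l r where lr: "strict_mono r" "(ab \<circ> r) \<longlonglongrightarrow> l"
    using seq_compactE by metis
  define a where "a = fst l"
  define b where "b = snd l"
  have la: "(\<lambda>j. fst (ab (r j))) \<longlonglongrightarrow> a" using tendsto_fst[OF lr(2)] by (simp add: a_def o_def)
  have lb: "(\<lambda>j. snd (ab (r j))) \<longlonglongrightarrow> b" using tendsto_snd[OF lr(2)] by (simp add: b_def o_def)
  have lq: "(\<lambda>j. qs (r j)) \<longlonglongrightarrow> x" using LIMSEQ_subseq_LIMSEQ[OF qs(2) lr(1)] by (simp add: o_def)
  have inA: "c \<in> A_set p x" if c: "(\<lambda>j. f (ab (r j))) \<longlonglongrightarrow> c" and f: "\<And>j. f (ab j) \<in> A_set p (qs j)" for f c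
  proof -
    have "f (ab (r j)) \<in> attractor p (qs (r j)) \<inter> {1/2..}" for j
      using f[of "r j"] good.A_eq[OF gj] by auto
    then have "c \<in> attractor p x" "c \<ge> 1/2"
      using limit_in[OF gx gj lq, of "\<lambda>j. f (ab (r j))" c] c
        LIMSEQ_le_const[OF c, of "1/2"] by auto
    then show ?thesis using good.A_eq[OF gx] by auto
  qed
  have "a \<in> A_set p x" using inA[of fst a] la ab(1) by blast
  moreover have "b \<in> A_set p x" using inA[of snd b] lb ab(2) by blast
  moreover have "p^m * a = x^n * b"
  proof (rule LIMSEQ_unique)
    show "(\<lambda>j. p^m * fst (ab (r j))) \<longlonglongrightarrow> p^m * a" using la by (intro tendsto_intros)
    have "(\<lambda>j. qs (r j) ^ n * snd (ab (r j))) \<longlonglongrightarrow> x^n * b" using lq lb by (intro tendsto_intros)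
    then show "(\<lambda>j. p^m * fst (ab (r j))) \<longlonglongrightarrow> x^n * b" using ab(3) by simp
  qed
  ultimately show "x \<in> Delta m n p" using x unfolding Delta_iff by auto
qed




lemma pow_diff_ge:
  fixes a b :: real assumes "0 \<le> a" "a \<le> b"
  shows "b ^ Suc n - a ^ Suc n \<ge> a ^ n * (b - a)"
proof -
  have "b ^ Suc n - a ^ Suc n \<ge> real (Suc n) * a ^ n * (b - a)"
  proof (induction n)
    case 0 then show ?case by simp
  next
    case (Suc n)
    have e1: "b ^ Suc (Suc n) - a ^ Suc (Suc n) = b * (b ^ Suc n - a ^ Suc n) + a ^ Suc n * (b - a)"
      by (simp add: algebra_simps)
    have e2: "b * (b ^ Suc n - a ^ Suc n) \<ge> a * (real (Suc n) * a ^ n * (b - a))"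
      using Suc assms by (intro mult_mono) (auto intro!: mult_nonneg_nonneg)
    have e3: "a * (real (Suc n) * a ^ n * (b - a)) + a ^ Suc n * (b - a) = real (Suc (Suc n)) * a ^ Suc n * (b - a)"
      by (simp add: algebra_simps)
    show ?case using e1 e2 e3 by linarith
  qed
  moreover have "real (Suc n) * a ^ n * (b - a) \<ge> a ^ n * (b - a)"
  proof -
    have "0 \<le> real n * (a^n*(b-a))" using assms by simp
    moreover have "real (Suc n) * a^n*(b-a) = a^n*(b-a) + real n * (a^n*(b-a))" by (simp add: algebra_simps)
    ultimately show ?thesis by linarith
  qed
  ultimately show ?thesis by linarith
qed

lemma key_arith:
  fixes P s Q1 Q2 q1 \<Delta> c1 c2 d1 d2 e :: real
  assumes "\<bar>c1 - c2\<bar> \<le> 2 * \<Delta>" "\<bar>d1 - d2\<bar> \<le> 2 * \<Delta>" "d2 \<ge> 7/8" "0 \<le> P" "P \<le> 2 * Q1"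
    "Q1 = q1 * s" "0 \<le> q1" "q1 \<le> 1/16" "0 \<le> s" "0 \<le> \<Delta>" "Q2 - Q1 \<ge> s * \<Delta>"
    "\<bar>P * c1 - Q1 * d1\<bar> \<le> e" "\<bar>P * c2 - Q2 * d2\<bar> \<le> e"
  shows "s * \<Delta> \<le> 4 * e"
proof -
  have "q1 * s \<le> (1/16) * s" using assms(8,9) by (rule mult_right_mono)
  then have Q1: "0 \<le> Q1" "Q1 \<le> s / 16" using assms(6-9) by auto
  have "- (2 * \<Delta>) \<le> c1 - c2" using assms(1) by linarith
  from mult_left_mono[OF this assms(4)] have h1: "P * (c1 - c2) \<ge> - (P * (2 * \<Delta>))" by simp
  have "0 \<le> 2 * \<Delta>" using assms(10) by simp
  from mult_right_mono[OF assms(5) this] have h2: "P * (2 * \<Delta>) \<le> 2 * Q1 * (2 * \<Delta>)" .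
  have h3: "(Q2 - Q1) * d2 \<ge> (s * \<Delta>) * (7/8)"
    using assms(3,9,10,11) by (meson mult_mono mult_nonneg_nonneg order.trans zero_le_divide_iff zero_le_numeral)
  have "- (2 * \<Delta>) \<le> d2 - d1" using assms(2) by linarith
  from mult_left_mono[OF this Q1(1)] have h4: "Q1 * (d2 - d1) \<ge> - (Q1 * (2 * \<Delta>))" by simp
  from mult_right_mono[OF Q1(2) assms(10)] have h5: "Q1 * \<Delta> \<le> s / 16 * \<Delta>" .
  have eq: "(P * c1 - Q1 * d1) - (P * c2 - Q2 * d2) = P * (c1 - c2) + (Q2 - Q1) * d2 + Q1 * (d2 - d1)"
    by (simp add: algebra_simps)
  have "(P * c1 - Q1 * d1) - (P * c2 - Q2 * d2) \<le> 2 * e" using assms(12,13) by linarith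
  then show ?thesis using h1 h2 h3 h4 h5 eq by (simp add: algebra_simps)
qed




definition Bset :: "real \<Rightarrow> nat \<Rightarrow> nat \<Rightarrow> real \<Rightarrow> real \<Rightarrow> real \<Rightarrow> nat \<Rightarrow> nat list \<Rightarrow> nat list \<Rightarrow> real set" where
  "Bset p m n \<alpha> \<beta> \<rho> k w w' = {q \<in> {\<alpha>..\<beta>}. p^m / 2 \<le> q^n \<and> 7/8 \<le> Sw p q w' 0 \<and>
      \<bar>p^m * Sw p q w 0 - q^n * Sw p q w' 0\<bar> \<le> 2 * \<rho>^k}"

lemma cover:
  assumes p: "0 < p" "p < 1/16" and ab: "0 < \<alpha>" "\<beta> < 1/16" and k: "k \<ge> 1"
    and q: "q \<in> {\<alpha>..\<beta>}" "q \<in> Delta m n p"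
  shows "\<exists>w w'. set w \<subseteq> {..<4} \<and> length w = k \<and> set w' \<subseteq> {..<4} \<and> length w' = k \<and>
     q \<in> Bset p m n \<alpha> \<beta> (max p \<beta>) k w w'"
proof -
  define \<rho> where "\<rho> = max p \<beta>"
  have g: "good p q" using p ab q by (auto simp: good_def)
  obtain a b where abA: "a \<in> A_set p q" "b \<in> A_set p q" "p^m * a = q^n * b" using q(2) unfolding Delta_iff by auto
  have ba: "15/16 \<le> a" "a \<le> 1" "15/16 \<le> b" "b \<le> 1" using good.A_bounds[OF g] abA by auto
  have aK: "a \<in> attractor p q" "b \<in> attractor p q" using abA good.A_eq[OF g] by auto
  obtain w y where wy: "length w = k" "set w \<subseteq> {..<4}" "y \<in> attractor p q" "a = Sw p q w y"
    using good.cyl[OF g aK(1)] by blast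
  obtain w' y' where wy': "length w' = k" "set w' \<subseteq> {..<4}" "y' \<in> attractor p q" "b = Sw p q w' y'"
    using good.cyl[OF g aK(2)] by blast
  have y: "0 \<le> y" "y \<le> 1" "0 \<le> y'" "y' \<le> 1" using wy wy' good.K_01[OF g] by auto
  have r: "0 < \<rho>" "\<rho> < 1/16" "p \<le> \<rho>" "q \<le> \<rho>" using p ab q by (auto simp: \<rho>_def)
  have rk: "0 \<le> \<rho>^k" "\<rho>^k \<le> 1/16"
  proof -
    show "0 \<le> \<rho>^k" using r by simp
    have "\<rho>^k \<le> \<rho>^1" using k r by (intro power_decreasing) auto
    then show "\<rho>^k \<le> 1/16" using r by simp
  qed
  have da: "\<bar>a - Sw p q w 0\<bar> \<le> \<rho>^k"
  proof -
    have "\<bar>a - Sw p q w 0\<bar> \<le> \<rho>^k * \<bar>y - 0\<bar>" using Sw_contr[of p \<rho> q w y 0] r p q wy ab by simp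
    also have "\<dots> \<le> \<rho>^k" using y rk by (simp add: mult_left_le)
    finally show ?thesis .
  qed
  have db: "\<bar>b - Sw p q w' 0\<bar> \<le> \<rho>^k"
  proof -
    have "\<bar>b - Sw p q w' 0\<bar> \<le> \<rho>^k * \<bar>y' - 0\<bar>" using Sw_contr[of p \<rho> q w' y' 0] r p q wy' ab by simp
    also have "\<dots> \<le> \<rho>^k" using y rk by (simp add: mult_left_le)
    finally show ?thesis .
  qed
  have pm: "0 \<le> p^m" "p^m \<le> 1" using p by (auto intro: power_le_one)
  have qn: "0 \<le> q^n" "q^n \<le> 1" using q ab by (auto intro: power_le_one)
  have c1: "p^m / 2 \<le> q^n"
  proof -
    have "p^m * (15/16) \<le> p^m * a" using pm ba by (intro mult_left_mono) auto
    also have "\<dots> = q^n * b" by (rule abA(3))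
    also have "\<dots> \<le> q^n * 1" using qn ba by (intro mult_left_mono) auto
    finally show ?thesis using pm by simp
  qed
  have c2: "7/8 \<le> Sw p q w' 0" using db ba rk by linarith
  have c3: "\<bar>p^m * Sw p q w 0 - q^n * Sw p q w' 0\<bar> \<le> 2 * \<rho>^k"
  proof -
    have e: "p^m * Sw p q w 0 - q^n * Sw p q w' 0 = p^m * (Sw p q w 0 - a) + q^n * (b - Sw p q w' 0)"
      using abA(3) by (simp add: algebra_simps)
    have "\<bar>p^m * (Sw p q w 0 - a)\<bar> \<le> 1 * \<rho>^k" unfolding abs_mult using pm da
      by (intro mult_mono) (auto simp: abs_minus_commute)
    moreover have "\<bar>q^n * (b - Sw p q w' 0)\<bar> \<le> 1 * \<rho>^k" unfolding abs_mult using qn db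
      by (intro mult_mono) auto
    ultimately show ?thesis unfolding e
      using abs_triangle_ineq[of "p^m * (Sw p q w 0 - a)" "q^n * (b - Sw p q w' 0)"] by linarith
  qed
  show ?thesis using wy wy' c1 c2 c3 q(1) unfolding Bset_def \<rho>_def[symmetric] by blast
qed

lemma diam:
  assumes p: "0 < p" "p < 1/16" and ab: "0 < \<alpha>" "\<beta> < 1/16" and n: "n = Suc n'"
    and q: "q1 \<in> Bset p m n \<alpha> \<beta> \<rho> k w w'" "q2 \<in> Bset p m n \<alpha> \<beta> \<rho> k w w'" "q1 \<le> q2"
  shows "q2 - q1 \<le> 8 * \<rho>^k / \<alpha>^n'"
proof -
  have qq: "\<alpha> \<le> q1" "q1 \<le> \<beta>" "\<alpha> \<le> q2" "q2 \<le> \<beta>" using q by (auto simp: Bset_def)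
  have s: "q1^n' * (q2 - q1) \<le> 4 * (2 * \<rho>^k)"
  proof (rule key_arith)
    show "\<bar>Sw p q1 w 0 - Sw p q2 w 0\<bar> \<le> 2 * (q2 - q1)"
      using Sw_lip[of p q1 q2 0 w] p qq ab q(3) by simp
    show "\<bar>Sw p q1 w' 0 - Sw p q2 w' 0\<bar> \<le> 2 * (q2 - q1)"
      using Sw_lip[of p q1 q2 0 w'] p qq ab q(3) by simp
    show "7/8 \<le> Sw p q2 w' 0" using q by (auto simp: Bset_def)
    show "0 \<le> p^m" using p by simp
    show "p^m \<le> 2 * q1^n" using q by (auto simp: Bset_def)
    show "q1^n = q1 * q1^n'" using n by simp
    show "0 \<le> q1" "q1 \<le> 1/16" "0 \<le> q1^n'" "0 \<le> q2 - q1" using qq ab q(3) by auto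
    show "q2^n - q1^n \<ge> q1^n' * (q2 - q1)" using pow_diff_ge[of q1 q2 n'] qq ab q(3) n by simp
    show "\<bar>p^m * Sw p q1 w 0 - q1^n * Sw p q1 w' 0\<bar> \<le> 2 * \<rho>^k"
      "\<bar>p^m * Sw p q2 w 0 - q2^n * Sw p q2 w' 0\<bar> \<le> 2 * \<rho>^k" using q by (auto simp: Bset_def)
  qed
  have "\<alpha>^n' * (q2 - q1) \<le> q1^n' * (q2 - q1)"
    using qq ab q(3) by (intro mult_right_mono power_mono) auto
  then have "\<alpha>^n' * (q2 - q1) \<le> 8 * \<rho>^k" using s by simp
  then show ?thesis using ab by (simp add: field_simps)
qed




lemma no_interval:
  assumes p: "0 < p" "p < 1/16" and ab: "0 < \<alpha>" "\<alpha> < \<beta>" "\<beta> < 1/16" and n: "n = Suc n'"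
    and sub: "{\<alpha>..\<beta>} \<subseteq> Delta m n p"
  shows False
proof -
  define \<rho> where "\<rho> = max p \<beta>"
  have r: "0 < \<rho>" "\<rho> < 1/16" using p ab by (auto simp: \<rho>_def)
  have apos: "0 < \<alpha>^n'" using ab by simp
  have "0 < (\<beta> - \<alpha>) * \<alpha>^n' / 16" using ab apos by simp
  then obtain k0 where k0: "(16 * \<rho>)^k0 < (\<beta> - \<alpha>) * \<alpha>^n' / 16"
    using real_arch_pow_inv[of "(\<beta> - \<alpha>) * \<alpha>^n' / 16" "16 * \<rho>"] r by auto
  define k where "k = Suc k0"
  have "(16 * \<rho>)^k \<le> (16 * \<rho>)^k0" unfolding k_def using r by (intro power_decreasing) auto
  with k0 have kk: "(16 * \<rho>)^k < (\<beta> - \<alpha>) * \<alpha>^n' / 16" by linarith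
  have k1: "k \<ge> 1" by (simp add: k_def)
  define d where "d = 8 * \<rho>^k / \<alpha>^n'"
  have d0: "0 \<le> d" using r apos by (simp add: d_def)
  define W where "W = {w. set w \<subseteq> {..<4::nat} \<and> length w = k}"
  have finW: "finite W" unfolding W_def by (rule finite_lists_length_eq) simp
  have cardW: "card W = 4^k" unfolding W_def using card_lists_length_eq[of "{..<4::nat}" k] by simp
  define B where "B = (\<lambda>(w, w'). Bset p m n \<alpha> \<beta> \<rho> k w w')"
  define I where "I = (\<lambda>x. if B x = {} then {} else {(SOME c. c \<in> B x) - d .. (SOME c. c \<in> B x) + d})"
  have cov: "{\<alpha>..\<beta>} \<subseteq> (\<Union>x\<in>W \<times> W. I x)"
  proof
    fix q assume q: "q \<in> {\<alpha>..\<beta>}"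
    then obtain w w' where ww: "set w \<subseteq> {..<4}" "length w = k" "set w' \<subseteq> {..<4}" "length w' = k"
      "q \<in> Bset p m n \<alpha> \<beta> \<rho> k w w'"
      using cover[OF p ab(1) ab(3) k1 q] sub unfolding \<rho>_def by blast
    define c where "c = (SOME c. c \<in> B (w, w'))"
    have qB: "q \<in> B (w, w')" using ww by (simp add: B_def)
    then have cB: "c \<in> B (w, w')" unfolding c_def by (rule someI)
    have "\<bar>q - c\<bar> \<le> d"
    proof (cases "q \<le> c")
      case True then show ?thesis using diam[OF p ab(1) ab(3) n, of q m \<rho> k w w' c] qB cB
        by (simp add: B_def d_def)
    next
      case False then show ?thesis using diam[OF p ab(1) ab(3) n, of c m \<rho> k w w' q] qB cB
        by (simp add: B_def d_def)
    qed
    then have "q \<in> I (w, w')" using qB unfolding I_def c_def[symmetric] by auto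
    moreover have "(w, w') \<in> W \<times> W" using ww by (simp add: W_def)
    ultimately show "q \<in> (\<Union>x\<in>W \<times> W. I x)" by blast
  qed
  have cI: "compact (I x)" for x by (simp add: I_def)
  have "\<beta> - \<alpha> = measure lborel {\<alpha>..\<beta>}" using ab by simp
  also have "\<dots> \<le> measure lborel (\<Union>x\<in>W \<times> W. I x)"
    using cov finW cI by (intro measure_mono_fmeasurable fmeasurable_compact compact_UN) auto
  also have "\<dots> \<le> (\<Sum>x\<in>W \<times> W. measure lborel (I x))"
    using finW cI by (intro measure_UNION_le) (auto intro: borel_compact)
  also have "\<dots> \<le> (\<Sum>x\<in>W \<times> W. 2 * d)"
    by (intro sum_mono) (auto simp: I_def d0)
  also have "\<dots> = 16^k * (2 * d)" using cardW by (simp add: card_cartesian_product power_mult_distrib[symmetric])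
  also have "\<dots> = 16 * (16 * \<rho>)^k / \<alpha>^n'" by (simp add: d_def power_mult_distrib)
  also have "\<dots> < \<beta> - \<alpha>"
  proof -
    have "16 * (16 * \<rho>)^k < (\<beta> - \<alpha>) * \<alpha>^n'" using kk by simp
    then show ?thesis by (simp only: pos_divide_less_eq[OF apos])
  qed
  finally show False by simp
qed

theorem theorem17:
  fixes p :: real and m n :: nat
  assumes "0 < p" "p < 1/16" and "m \<ge> 1" "n \<ge> 1"
  shows "closedin (top_of_set {0<..<1/16}) (Delta m n p) \<and>
         (top_of_set {0<..<1/16}) interior_of
           ((top_of_set {0<..<1/16}) closure_of (Delta m n p)) = {}"
proof
  show cl: "closedin (top_of_set {0<..<1/16}) (Delta m n p)" using Delta_closed[OF assms(1,2)] .
  define S where "S = (top_of_set {0<..<1/16::real}) interior_of (Delta m n p)"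
  have "S = {}"
  proof (rule ccontr)
    assume "S \<noteq> {}"
    then obtain x where x: "x \<in> S" by blast
    have "openin (top_of_set {0<..<1/16::real}) S" unfolding S_def by (rule openin_interior_of)
    then have "open S" by (simp add: openin_open_eq[OF open_greaterThanLessThan])
    then obtain e where e: "e > 0" "ball x e \<subseteq> S" using x by (meson open_contains_ball)
    have "S \<subseteq> Delta m n p" unfolding S_def by (rule interior_of_subset)
    then have sub: "ball x e \<subseteq> Delta m n p" using e(2) by (rule order.trans[rotated])
    have "{x - e/2 .. x + e/2} \<subseteq> ball x e" using e by (auto simp: dist_real_def)
    then have sub2: "{x - e/2 .. x + e/2} \<subseteq> Delta m n p" using sub by (rule order.trans)
    have "x - e/2 \<in> {x - e/2 .. x + e/2}" "x + e/2 \<in> {x - e/2 .. x + e/2}" using e by auto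
    then have "x - e/2 \<in> Delta m n p" "x + e/2 \<in> Delta m n p" using sub2 by (auto simp del: atLeastAtMost_iff)
    then have lo: "0 < x - e/2" and hi: "x + e/2 < 1/16" unfolding Delta_def by auto
    have lt: "x - e/2 < x + e/2" using e by simp
    have nn: "n = Suc (n - 1)" using assms by simp
    show False by (rule no_interval[OF assms(1,2) lo lt hi nn sub2])
  qed
  then show "(top_of_set {0<..<1/16}) interior_of
           ((top_of_set {0<..<1/16}) closure_of (Delta m n p)) = {}"
    unfolding closure_of_closedin[OF cl] S_def .
qed


end
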